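(* Let $F$ be a DQCNF. Starting from $F$, repeatedly replace the current DQCNF $G$ by $\varphi * G$ for some non-trivial autarky $\varphi$ of $G$, as long as $G$ has a non-trivial autarky. Then this process terminates, and regardless of the choices of autarkies made, the final result is the lean kernel $N(F)$, the largest lean sub-DQCNF of $F$.
   Context: A DQCNF $F$ consists of a finite set $X$ of universal variables, a finite set $Y$ of existential variables (disjoint from $X$), for each $y \in Y$ a dependency set $D(y) \subseteq X$, and a matrix which is a CNF, i.e. a finite set of clauses over the variables $X \cup Y$. A sub-DQCNF of $F$ is a DQCNF with the same variables and dependency sets whose matrix is a subset of the matrix of $F$. An autarky $\varphi$ of $F$ is a partial assignment that assigns to some set $\mathrm{var}(\varphi) \subseteq Y$ of existential variables boolean functions $\varphi(y)$ depending only on the variables in $D(y)$, such that every clause of $F$ containing a literal whose variable lies in $\mathrm{var}(\varphi)$ becomes a tautology after substituting $\varphi(y)$ for each $y \in \mathrm{var}(\varphi)$, i.e. evaluates to true under every assignment to all universal variables and all existential variables not in $\mathrm{var}(\varphi)$. The DQCNF $\varphi * F$ has the same variables and dependency sets as $F$, and its matrix is obtained by removing all clauses of $F$ containing a literal whose variable lies in $\mathrm{var}(\varphi)$ (the clauses satisfied by $\varphi$). An autarky $\varphi$ of $F$ is non-trivial if $\varphi * F \neq F$, i.e. it satisfies at least one clause. A DQCNF is lean if it has no non-trivial autarky. The union of two lean sub-DQCNFs of $F$ is lean, so $F$ has a unique largest lean sub-DQCNF, called the lean kernel $N(F)$. *)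

theory Defs
  imports Main
begin

text \<open>Literals are pairs (variable, polarity); True = positive literal. Sub-DQCNFs keep X, Y, D fixed, so we
  only vary the matrix.\<close>

type_synonym 'v lit = "'v \<times> bool"
type_synonym 'v clause = "'v lit set"
type_synonym 'v cnf = "'v clause set"

definition dqcnf :: "'v set \<Rightarrow> 'v set \<Rightarrow> ('v \<Rightarrow> 'v set) \<Rightarrow> 'v cnf \<Rightarrow> bool" where
  "dqcnf X Y D F \<longleftrightarrow> finite X \<and> finite Y \<and> X \<inter> Y = {} \<and>
     (\<forall>y\<in>Y. D y \<subseteq> X) \<and> finite F \<and>
     (\<forall>C\<in>F. finite C \<and> (\<forall>l\<in>C. fst l \<in> X \<union> Y))"

text \<open>A partial assignment of boolean functions to existential variables:
  phi y = Some f assigns to y the boolean function f, which takes a total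
  assignment (of which only the universal variables in D y may matter).\<close>

type_synonym 'v passign = "'v \<Rightarrow> (('v \<Rightarrow> bool) \<Rightarrow> bool) option"

definition lit_val :: "'v passign \<Rightarrow> ('v \<Rightarrow> bool) \<Rightarrow> 'v lit \<Rightarrow> bool" where
  "lit_val \<phi> \<alpha> l = (case \<phi> (fst l) of
       Some f \<Rightarrow> f \<alpha> = snd l
     | None \<Rightarrow> \<alpha> (fst l) = snd l)"

definition touches :: "'v passign \<Rightarrow> 'v clause \<Rightarrow> bool" where
  "touches \<phi> C \<longleftrightarrow> (\<exists>l\<in>C. fst l \<in> dom \<phi>)"

definition autarky :: "'v set \<Rightarrow> 'v set \<Rightarrow> ('v \<Rightarrow> 'v set) \<Rightarrow> 'v cnf \<Rightarrow> 'v passign \<Rightarrow> bool" where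
  "autarky X Y D F \<phi> \<longleftrightarrow>
     dom \<phi> \<subseteq> Y \<and>
     (\<forall>y f. \<phi> y = Some f \<longrightarrow> (\<forall>\<alpha> \<beta>. (\<forall>x\<in>D y. \<alpha> x = \<beta> x) \<longrightarrow> f \<alpha> = f \<beta>)) \<and>
     (\<forall>C\<in>F. touches \<phi> C \<longrightarrow> (\<forall>\<alpha>. \<exists>l\<in>C. lit_val \<phi> \<alpha> l))"

definition apply_aut :: "'v passign \<Rightarrow> 'v cnf \<Rightarrow> 'v cnf" where
  "apply_aut \<phi> F = {C\<in>F. \<not> touches \<phi> C}"

definition nontrivial_autarky :: "'v set \<Rightarrow> 'v set \<Rightarrow> ('v \<Rightarrow> 'v set) \<Rightarrow> 'v cnf \<Rightarrow> 'v passign \<Rightarrow> bool" where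
  "nontrivial_autarky X Y D F \<phi> \<longleftrightarrow> autarky X Y D F \<phi> \<and> apply_aut \<phi> F \<noteq> F"

definition lean :: "'v set \<Rightarrow> 'v set \<Rightarrow> ('v \<Rightarrow> 'v set) \<Rightarrow> 'v cnf \<Rightarrow> bool" where
  "lean X Y D F \<longleftrightarrow> \<not> (\<exists>\<phi>. nontrivial_autarky X Y D F \<phi>)"

definition is_lean_kernel :: "'v set \<Rightarrow> 'v set \<Rightarrow> ('v \<Rightarrow> 'v set) \<Rightarrow> 'v cnf \<Rightarrow> 'v cnf \<Rightarrow> bool" where
  "is_lean_kernel X Y D F G \<longleftrightarrow> G \<subseteq> F \<and> lean X Y D G \<and>
     (\<forall>H. H \<subseteq> F \<and> lean X Y D H \<longrightarrow> H \<subseteq> G)"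

definition aut_step :: "'v set \<Rightarrow> 'v set \<Rightarrow> ('v \<Rightarrow> 'v set) \<Rightarrow> 'v cnf \<Rightarrow> 'v cnf \<Rightarrow> bool" where
  "aut_step X Y D G G' \<longleftrightarrow> (\<exists>\<phi>. nontrivial_autarky X Y D G \<phi> \<and> G' = apply_aut \<phi> G)"

end

theory Submission
  imports Defs
begin

lemma autarky_sub: "autarky X Y D G \<phi> \<Longrightarrow> H \<subseteq> G \<Longrightarrow> autarky X Y D H \<phi>"
  unfolding autarky_def by (meson subsetD)

lemma step_sub: "aut_step X Y D G G' \<Longrightarrow> G' \<subset> G"
  unfolding aut_step_def nontrivial_autarky_def apply_aut_def by auto

lemma step_keep:
  assumes "aut_step X Y D G G'" "H \<subseteq> G" "lean X Y D H"
  shows "H \<subseteq> G'"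
proof -
  obtain \<phi> where p: "nontrivial_autarky X Y D G \<phi>" "G' = apply_aut \<phi> G"
    using assms(1) unfolding aut_step_def by blast
  have "autarky X Y D H \<phi>" using p(1) assms(2) autarky_sub
    unfolding nontrivial_autarky_def by metis
  then have "apply_aut \<phi> H = H" using assms(3)
    unfolding lean_def nontrivial_autarky_def by metis
  then show ?thesis using p(2) assms(2) unfolding apply_aut_def by auto
qed

lemma star_keep:
  assumes "(aut_step X Y D)\<^sup>*\<^sup>* F G"
  shows "G \<subseteq> F \<and> (\<forall>H. H \<subseteq> F \<and> lean X Y D H \<longrightarrow> H \<subseteq> G)"
  using assms
proof (induction rule: rtranclp_induct)
  case base
  then show ?case by blast
next
  case (step y z)
  then show ?case using step_sub[of X Y D y z] step_keep[of X Y D y z] by (meson order.trans less_imp_le)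
qed

theorem lemma3:
  fixes X Y :: "'v set" and D :: "'v \<Rightarrow> 'v set" and F :: "'v cnf"
  assumes "dqcnf X Y D F"
  shows "\<not> (\<exists>s. s 0 = F \<and> (\<forall>n. aut_step X Y D (s n) (s (Suc n)))) \<and>
         (\<forall>G. (aut_step X Y D)\<^sup>*\<^sup>* F G \<and> lean X Y D G \<longrightarrow> is_lean_kernel X Y D F G)"
proof
  have fin: "finite F" using assms unfolding dqcnf_def by blast
  show "\<not> (\<exists>s. s 0 = F \<and> (\<forall>n. aut_step X Y D (s n) (s (Suc n))))"
  proof
    assume "\<exists>s. s 0 = F \<and> (\<forall>n. aut_step X Y D (s n) (s (Suc n)))"
    then obtain s where s0: "s 0 = F" and ss: "\<And>n. aut_step X Y D (s n) (s (Suc n))" by blast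
    have "s n \<subseteq> F \<and> card (s n) + n \<le> card F" for n
    proof (induction n)
      case 0 then show ?case using s0 by simp
    next
      case (Suc n)
      have sub: "s (Suc n) \<subset> s n" using step_sub ss by blast
      have "finite (s n)" using Suc fin finite_subset by blast
      then have "card (s (Suc n)) < card (s n)" using sub psubset_card_mono by blast
      then show ?case using Suc sub by auto
    qed
    then have "card (s (Suc (card F))) + Suc (card F) \<le> card F" by blast
    then show False by simp
  qed
next
  show "\<forall>G. (aut_step X Y D)\<^sup>*\<^sup>* F G \<and> lean X Y D G \<longrightarrow> is_lean_kernel X Y D F G"
    using star_keep unfolding is_lean_kernel_def by metis
qed

end
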